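(* Let $\mathcal{H}$ be a supersolvable arrangement of rank $n\ge 3$ with decomposition $\mathcal{H}=\mathcal{H}_0\sqcup\mathcal{H}_1$ as in the definition of supersolvability, and let $\rho:\mathcal{R}(\mathcal{H})\to\mathcal{R}(\mathcal{H}_0)$ map every region of $\mathcal{H}$ to the region of $\mathcal{H}_0$ containing it. Then: (i) for any $R\in\mathcal{R}(\mathcal{H}_0)$, the subgraph of $G(\mathcal{H})$ induced by $\rho^{-1}(R)$ is a path of length $|\mathcal{H}_1|$; (ii) if $R,R'\in\mathcal{R}(\mathcal{H}_0)$ are adjacent in $G(\mathcal{H}_0)$, then, writing $\ell=|\mathcal{H}_1|$, the two paths $\rho^{-1}(R)$ and $\rho^{-1}(R')$ can be enumerated along the paths as $A_0,\dots,A_\ell$ and $B_0,\dots,B_\ell$ such that $\{A_0,B_0\}$ and $\{A_\ell,B_\ell\}$ are edges of $G(\mathcal{H})$ and every edge of $G(\mathcal{H})$ between the two paths is of the form $\{A_i,B_i\}$ for some $i$; (iii) if $R,R'\in\mathcal{R}(\mathcal{H}_0)$ are not adjacent in $G(\mathcal{H}_0)$, then there are no edges of $G(\mathcal{H})$ between $\rho^{-1}(R)$ and $\rho^{-1}(R')$.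
   Context: A hyperplane arrangement is a finite set of linear hyperplanes in $\mathbb{R}^d$; its rank is the dimension of the span of the normals; $\mathcal{R}(\mathcal{H})$ denotes its set of regions (connected components of the complement of the union of the hyperplanes), and $G(\mathcal{H})$ its graph of regions (regions adjacent iff separated by exactly one hyperplane). An arrangement of rank $n$ is supersolvable if $n\le 2$, or $n\ge 3$ and $\mathcal{H}=\mathcal{H}_0\sqcup\mathcal{H}_1$ with both parts nonempty, $\mathcal{H}_0$ supersolvable of rank $n-1$, and for any distinct $H',H''\in\mathcal{H}_1$ some $H\in\mathcal{H}_0$ satisfies $H'\cap H''\subseteq H$. The length of a path is its number of edges. *)

theory Defs
  imports "HOL-Analysis.Analysis"
begin

definition lin_hyperplane :: "'a::euclidean_space set \<Rightarrow> bool" where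
  "lin_hyperplane H \<longleftrightarrow> (\<exists>a. a \<noteq> 0 \<and> H = {x. a \<bullet> x = 0})"

definition arrangement :: "'a::euclidean_space set set \<Rightarrow> bool" where
  "arrangement \<H> \<longleftrightarrow> finite \<H> \<and> (\<forall>H\<in>\<H>. lin_hyperplane H)"

definition arr_rank :: "'a::euclidean_space set set \<Rightarrow> nat" where
  "arr_rank \<H> = dim {a. a \<noteq> 0 \<and> (\<exists>H\<in>\<H>. H = {x. a \<bullet> x = 0})}"

definition regions :: "'a::euclidean_space set set \<Rightarrow> 'a set set" where
  "regions \<H> = components (UNIV - \<Union>\<H>)"

definition separates :: "'a::euclidean_space set \<Rightarrow> 'a set \<Rightarrow> 'a set \<Rightarrow> bool" where
  "separates H R R' \<longleftrightarrow> (\<exists>a. H = {x. a \<bullet> x = 0} \<and> (\<forall>x\<in>R. a \<bullet> x > 0) \<and> (\<forall>y\<in>R'. a \<bullet> y < 0))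
                        \<or> (\<exists>a. H = {x. a \<bullet> x = 0} \<and> (\<forall>x\<in>R. a \<bullet> x < 0) \<and> (\<forall>y\<in>R'. a \<bullet> y > 0))"

definition region_adj :: "'a::euclidean_space set set \<Rightarrow> 'a set \<Rightarrow> 'a set \<Rightarrow> bool" where
  "region_adj \<H> R R' \<longleftrightarrow> R \<in> regions \<H> \<and> R' \<in> regions \<H> \<and>
     card {H\<in>\<H>. separates H R R'} = 1"

definition modular_cond :: "'a::euclidean_space set set \<Rightarrow> 'a set set \<Rightarrow> bool" where
  "modular_cond \<H>0 \<H>1 \<longleftrightarrow>
     (\<forall>H'\<in>\<H>1. \<forall>H''\<in>\<H>1. H' \<noteq> H'' \<longrightarrow> (\<exists>H\<in>\<H>0. H' \<inter> H'' \<subseteq> H))"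

inductive supersolvable :: "'a::euclidean_space set set \<Rightarrow> bool" where
  base: "arrangement \<H> \<Longrightarrow> arr_rank \<H> \<le> 2 \<Longrightarrow> supersolvable \<H>"
| step: "arrangement \<H> \<Longrightarrow> arr_rank \<H> \<ge> 3 \<Longrightarrow> \<H> = \<H>0 \<union> \<H>1 \<Longrightarrow> \<H>0 \<inter> \<H>1 = {} \<Longrightarrow>
         \<H>0 \<noteq> {} \<Longrightarrow> \<H>1 \<noteq> {} \<Longrightarrow> supersolvable \<H>0 \<Longrightarrow> arr_rank \<H>0 = arr_rank \<H> - 1 \<Longrightarrow>
         modular_cond \<H>0 \<H>1 \<Longrightarrow> supersolvable \<H>"

definition rho :: "'a::euclidean_space set set \<Rightarrow> 'a set \<Rightarrow> 'a set" where
  "rho \<H>0 A = (THE R. R \<in> regions \<H>0 \<and> A \<subseteq> R)"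

text \<open>A is an enumeration A 0, ..., A l of the vertex set S such that the subgraph
  of adj induced by S is the path A 0 - A 1 - ... - A l (of length l).\<close>
definition path_enum :: "('v \<Rightarrow> 'v \<Rightarrow> bool) \<Rightarrow> 'v set \<Rightarrow> nat \<Rightarrow> (nat \<Rightarrow> 'v) \<Rightarrow> bool" where
  "path_enum adj S l A \<longleftrightarrow> bij_betw A {0..l} S \<and>
     (\<forall>i\<le>l. \<forall>j\<le>l. adj (A i) (A j) \<longleftrightarrow> (i = Suc j \<or> j = Suc i))"

end

theory Submission imports Defs begin

definition pos :: "('a::euclidean_space set \<Rightarrow> 'a) \<Rightarrow> 'a set set \<Rightarrow> 'a \<Rightarrow> 'a set set" where
  "pos N S x = {H\<in>S. N H \<bullet> x > 0}"

definition cell :: "('a::euclidean_space set \<Rightarrow> 'a) \<Rightarrow> 'a set set \<Rightarrow> 'a \<Rightarrow> 'a set" where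
  "cell N S x = {y. y \<notin> \<Union>S \<and> pos N S y = pos N S x}"

definition validN :: "('a::euclidean_space set \<Rightarrow> 'a) \<Rightarrow> 'a set set \<Rightarrow> bool" where
  "validN N S \<longleftrightarrow> (\<forall>H\<in>S. N H \<noteq> 0 \<and> H = {x. N H \<bullet> x = 0})"

lemma validN_notin: "validN N S \<Longrightarrow> y \<notin> \<Union>S \<longleftrightarrow> (\<forall>H\<in>S. N H \<bullet> y \<noteq> 0)"
  unfolding validN_def by blast

lemma validN_mono: "validN N S \<Longrightarrow> T \<subseteq> S \<Longrightarrow> validN N T"
  unfolding validN_def by blast

lemma cell_sign:
  assumes "validN N S" "x \<notin> \<Union>S" "y \<in> cell N S x" "H \<in> S"
  shows "(N H \<bullet> y > 0 \<longleftrightarrow> N H \<bullet> x > 0) \<and> N H \<bullet> y \<noteq> 0"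
  using assms unfolding cell_def pos_def validN_def by blast

lemma self_in_cell: "x \<notin> \<Union>S \<Longrightarrow> x \<in> cell N S x"
  unfolding cell_def by auto

lemma convex_cell:
  assumes "validN N S" "x \<notin> \<Union>S"
  shows "convex (cell N S x)"
  unfolding convex_def
proof (intro ballI allI impI)
  fix y z and u w :: real
  assume y: "y \<in> cell N S x" and z: "z \<in> cell N S x" and uw: "0 \<le> u" "0 \<le> w" "u + w = 1"
  have key: "(N H \<bullet> (u *\<^sub>R y + w *\<^sub>R z) > 0 \<longleftrightarrow> N H \<bullet> x > 0) \<and> N H \<bullet> (u *\<^sub>R y + w *\<^sub>R z) \<noteq> 0"
    if H: "H \<in> S" for H
  proof -
    have a: "(N H \<bullet> y > 0 \<longleftrightarrow> N H \<bullet> x > 0) \<and> N H \<bullet> y \<noteq> 0"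
      and b: "(N H \<bullet> z > 0 \<longleftrightarrow> N H \<bullet> x > 0) \<and> N H \<bullet> z \<noteq> 0"
      using cell_sign[OF assms y H] cell_sign[OF assms z H] by auto
    have e: "N H \<bullet> (u *\<^sub>R y + w *\<^sub>R z) = u * (N H \<bullet> y) + w * (N H \<bullet> z)"
      by (simp add: inner_add_right)
    show ?thesis
    proof (cases "N H \<bullet> x > 0")
      case True
      then have "N H \<bullet> y > 0" "N H \<bullet> z > 0" using a b by auto
      then have "u * (N H \<bullet> y) + w * (N H \<bullet> z) > 0" using uw
        by (smt (verit) mult_nonneg_nonneg mult_pos_pos)
      then show ?thesis using e True by simp
    next
      case False
      then have "N H \<bullet> y < 0" "N H \<bullet> z < 0" using a b by auto
      then have "u * (N H \<bullet> y) + w * (N H \<bullet> z) < 0" using uw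
        by (smt (verit) mult_nonneg_nonpos mult_pos_neg)
      then show ?thesis using e False by simp
    qed
  qed
  show "u *\<^sub>R y + w *\<^sub>R z \<in> cell N S x"
    unfolding cell_def pos_def using key assms(1) unfolding validN_def by auto
qed

lemma component_eq_cell:
  assumes "validN N S" "x \<notin> \<Union>S"
  shows "connected_component_set (UNIV - \<Union>S) x = cell N S x"
proof
  show "cell N S x \<subseteq> connected_component_set (UNIV - \<Union>S) x"
  proof (rule connected_component_maximal)
    show "x \<in> cell N S x" using assms(2) by (rule self_in_cell)
    show "connected (cell N S x)" using convex_cell[OF assms] convex_connected by blast
    show "cell N S x \<subseteq> UNIV - \<Union>S" unfolding cell_def by blast
  qed
next
  show "connected_component_set (UNIV - \<Union>S) x \<subseteq> cell N S x"
  proof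
    fix y assume y: "y \<in> connected_component_set (UNIV - \<Union>S) x"
    let ?C = "connected_component_set (UNIV - \<Union>S) x"
    have xC: "x \<in> ?C" using assms(2) by simp
    have sub: "?C \<subseteq> UNIV - \<Union>S" by (rule connected_component_subset)
    have nz: "N H \<bullet> z \<noteq> 0" if "z \<in> ?C" "H \<in> S" for z H
      using sub that assms(1) unfolding validN_def by blast
    have "N H \<bullet> y > 0 \<longleftrightarrow> N H \<bullet> x > 0" if H: "H \<in> S" for H
    proof (rule ccontr)
      assume "\<not> ?thesis"
      then consider "N H \<bullet> y > 0" "\<not> N H \<bullet> x > 0" | "\<not> N H \<bullet> y > 0" "N H \<bullet> x > 0" by blast
      then show False
      proof cases
        case 1
        then have "N H \<bullet> x \<le> 0" by simp
        then obtain z where "z \<in> ?C" "N H \<bullet> z = 0"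
          using connected_ivt_hyperplane[of ?C x y "N H" 0] xC y 1 by fastforce
        then show False using nz H by blast
      next
        case 2
        then have "N H \<bullet> y \<le> 0" by simp
        then obtain z where "z \<in> ?C" "N H \<bullet> z = 0"
          using connected_ivt_hyperplane[of ?C y x "N H" 0] xC y 2 by fastforce
        then show False using nz H by blast
      qed
    qed
    then show "y \<in> cell N S x" using y sub unfolding cell_def pos_def by auto
  qed
qed

lemma regions_cell:
  assumes "validN N S"
  shows "regions S = cell N S ` (UNIV - \<Union>S)"
  unfolding regions_def components_def using component_eq_cell[OF assms] by auto

lemma cell_eq_iff:
  assumes "x \<notin> \<Union>S" "y \<notin> \<Union>S"
  shows "cell N S x = cell N S y \<longleftrightarrow> pos N S x = pos N S y"
  using assms unfolding cell_def by blast

lemma separates_cell: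
  assumes "validN N S" "x \<notin> \<Union>S" "y \<notin> \<Union>S" "H \<in> S"
  shows "separates H (cell N S x) (cell N S y) \<longleftrightarrow> (H \<in> pos N S x) \<noteq> (H \<in> pos N S y)"
proof
  assume sep: "separates H (cell N S x) (cell N S y)"
  have xin: "x \<in> cell N S x" and yin: "y \<in> cell N S y" using assms self_in_cell by auto
  have Hdef: "H = {z. N H \<bullet> z = 0}" using assms unfolding validN_def by blast
  have nx: "N H \<bullet> x \<noteq> 0" and ny: "N H \<bullet> y \<noteq> 0" using assms unfolding validN_def by blast+
  from sep obtain a where aH: "H = {z. a \<bullet> z = 0}" and
    sg: "(a \<bullet> x > 0 \<and> a \<bullet> y < 0) \<or> (a \<bullet> x < 0 \<and> a \<bullet> y > 0)"
    unfolding separates_def using xin yin by blast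
  obtain z where zs: "z \<in> closed_segment x y" and az: "a \<bullet> z = 0"
  proof -
    from sg show ?thesis
    proof
      assume "a \<bullet> x > 0 \<and> a \<bullet> y < 0"
      then show ?thesis using connected_ivt_hyperplane[of "closed_segment x y" y x a 0] that
        by (auto simp: connected_segment)
    next
      assume "a \<bullet> x < 0 \<and> a \<bullet> y > 0"
      then show ?thesis using connected_ivt_hyperplane[of "closed_segment x y" x y a 0] that
        by (auto simp: connected_segment)
    qed
  qed
  have "z \<in> H" using aH az by blast
  then have NZ: "N H \<bullet> z = 0" using Hdef by blast
  show "(H \<in> pos N S x) \<noteq> (H \<in> pos N S y)"
  proof
    assume same: "(H \<in> pos N S x) = (H \<in> pos N S y)"
    show False
    proof (cases "N H \<bullet> x > 0")
      case True
      then have "N H \<bullet> y > 0" using same assms(4) unfolding pos_def by auto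
      then have "closed_segment x y \<subseteq> {w. N H \<bullet> w > 0}"
        using True by (intro closed_segment_subset) (auto simp: convex_halfspace_gt)
      then show False using zs NZ by auto
    next
      case False
      then have "N H \<bullet> x < 0" using nx by simp
      moreover have "N H \<bullet> y < 0" using same assms(4) False ny unfolding pos_def by auto
      ultimately have "closed_segment x y \<subseteq> {w. N H \<bullet> w < 0}"
        by (intro closed_segment_subset) (auto simp: convex_halfspace_lt)
      then show False using zs NZ by auto
    qed
  qed
next
  assume d: "(H \<in> pos N S x) \<noteq> (H \<in> pos N S y)"
  have Hdef: "H = {z. N H \<bullet> z = 0}" using assms unfolding validN_def by blast
  have allx: "\<forall>z\<in>cell N S x. (N H \<bullet> z > 0 \<longleftrightarrow> N H \<bullet> x > 0) \<and> N H \<bullet> z \<noteq> 0"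
    using cell_sign[OF assms(1,2) _ assms(4)] by blast
  have ally: "\<forall>z\<in>cell N S y. (N H \<bullet> z > 0 \<longleftrightarrow> N H \<bullet> y > 0) \<and> N H \<bullet> z \<noteq> 0"
    using cell_sign[OF assms(1,3) _ assms(4)] by blast
  show "separates H (cell N S x) (cell N S y)"
  proof (cases "N H \<bullet> x > 0")
    case True
    then have "\<not> N H \<bullet> y > 0" using d assms(4) unfolding pos_def by auto
    then have "(\<forall>z\<in>cell N S x. N H \<bullet> z > 0) \<and> (\<forall>z\<in>cell N S y. N H \<bullet> z < 0)"
      using allx ally True by (metis linorder_neqE_linordered_idom)
    then show ?thesis unfolding separates_def using Hdef by blast
  next
    case False
    then have "N H \<bullet> y > 0" using d assms(4) unfolding pos_def by auto
    then have "(\<forall>z\<in>cell N S x. N H \<bullet> z < 0) \<and> (\<forall>z\<in>cell N S y. N H \<bullet> z > 0)"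
      using allx ally False by (metis linorder_neqE_linordered_idom)
    then show ?thesis unfolding separates_def using Hdef by blast
  qed
qed

lemma sep_set_cell:
  assumes "validN N S" "x \<notin> \<Union>S" "y \<notin> \<Union>S"
  shows "{H\<in>S. separates H (cell N S x) (cell N S y)} = (pos N S x - pos N S y) \<union> (pos N S y - pos N S x)"
  using separates_cell[OF assms] unfolding pos_def by auto

lemma region_adj_cell:
  assumes "validN N S" "x \<notin> \<Union>S" "y \<notin> \<Union>S"
  shows "region_adj S (cell N S x) (cell N S y) \<longleftrightarrow> card ((pos N S x - pos N S y) \<union> (pos N S y - pos N S x)) = 1"
  unfolding region_adj_def sep_set_cell[OF assms] regions_cell[OF assms(1)] using assms by auto


definition sd :: "'b set \<Rightarrow> 'b set \<Rightarrow> 'b set" where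
  "sd P Q = (P - Q) \<union> (Q - P)"

lemma nested_card:
  assumes "finite P" "finite Q" "P \<subseteq> Q \<or> Q \<subseteq> P"
  shows "card (sd P Q) = (if card P \<le> card Q then card Q - card P else card P - card Q)"
  using assms(3)
proof
  assume "P \<subseteq> Q"
  then have "sd P Q = Q - P" unfolding sd_def by auto
  then show ?thesis using \<open>P \<subseteq> Q\<close> assms(2) card_Diff_subset[of P Q] card_mono[OF assms(2) \<open>P \<subseteq> Q\<close>]
    by (auto simp: finite_subset)
next
  assume "Q \<subseteq> P"
  then have "sd P Q = P - Q" unfolding sd_def by auto
  then show ?thesis using \<open>Q \<subseteq> P\<close> assms(1) card_Diff_subset[of Q P] card_mono[OF assms(1) \<open>Q \<subseteq> P\<close>]
    by (auto simp: finite_subset)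
qed

lemma nested_eq:
  assumes "finite P" "finite Q" "P \<subseteq> Q \<or> Q \<subseteq> P" "card P = card Q"
  shows "P = Q"
  using assms card_subset_eq by metis

lemma real_gap_aux:
  fixes T :: "real set"
  assumes "finite T"
  shows "\<forall>m\<le>card T. \<exists>t. t \<notin> T \<and> card {u\<in>T. u < t} = m \<and> (m < card T \<longrightarrow> (\<exists>u\<in>T. t < u))"
  using assms
proof (induction T rule: finite_linorder_max_induct)
  case empty
  then show ?case by (auto intro: exI[of _ 0])
next
  case (insert b A)
  have bA: "b \<notin> A" using insert by auto
  have cI: "card (insert b A) = card A + 1" using insert bA by simp
  show ?case
  proof (intro allI impI)
    fix m assume m: "m \<le> card (insert b A)"
    consider "m = card A + 1" | "m < card A" | "m = card A" using m cI by linarith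
    then show "\<exists>t. t \<notin> insert b A \<and> card {u \<in> insert b A. u < t} = m \<and> (m < card (insert b A) \<longrightarrow> (\<exists>u\<in>insert b A. t < u))"
    proof cases
      case 1
      have "{u \<in> insert b A. u < b + 1} = insert b A" using insert by force
      moreover have "b + 1 \<notin> insert b A" using insert by force
      ultimately show ?thesis using 1 cI by (intro exI[of _ "b+1"]) auto
    next
      case 2
      then obtain t u where t: "t \<notin> A" "card {u\<in>A. u < t} = m" "u \<in> A" "t < u"
        using insert.IH by (meson less_imp_le)
      have "t < b" using t insert by force
      then have "{w \<in> insert b A. w < t} = {w\<in>A. w < t}" by auto
      then show ?thesis using t \<open>t < b\<close> by (intro exI[of _ t]) auto
    next
      case 3
      define t where "t = (if A = {} then b - 1 else (Max A + b) / 2)"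
      have lt: "a < t" if "a \<in> A" for a
      proof -
        have "A \<noteq> {}" using that by auto
        then have "a \<le> Max A" "Max A < b" using that insert by auto
        then show ?thesis unfolding t_def using \<open>A \<noteq> {}\<close> by auto
      qed
      have tb: "t < b"
      proof (cases "A = {}")
        case True then show ?thesis unfolding t_def by auto
      next
        case False then have "Max A < b" using insert by auto
        then show ?thesis unfolding t_def using False by auto
      qed
      have "{w \<in> insert b A. w < t} = A" using lt tb by auto
      moreover have "t \<notin> insert b A" using lt tb by auto
      ultimately show ?thesis using 3 tb by (intro exI[of _ t]) auto
    qed
  qed
qed

lemma real_gap:
  fixes T :: "real set"
  assumes "finite T" "m \<le> card T"
  shows "\<exists>t. t \<notin> T \<and> card {u\<in>T. u < t} = m"
  using real_gap_aux[OF assms(1)] assms(2) by blast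

lemma pos_subset: "pos N S x \<subseteq> S" unfolding pos_def by auto

lemma pos_mono_int: "T \<subseteq> S \<Longrightarrow> pos N T x = pos N S x \<inter> T" unfolding pos_def by auto

lemma rho_cell:
  assumes "validN M Hs" "H0 \<subseteq> Hs" "x \<notin> \<Union>Hs"
  shows "rho H0 (cell M Hs x) = cell M H0 x"
proof -
  have v0: "validN M H0" using validN_mono assms by blast
  have x0: "x \<notin> \<Union>H0" using assms by auto
  show ?thesis unfolding rho_def
  proof (rule the_equality)
    show "cell M H0 x \<in> regions H0 \<and> cell M Hs x \<subseteq> cell M H0 x"
    proof
      show "cell M H0 x \<in> regions H0" using regions_cell[OF v0] x0 by auto
      show "cell M Hs x \<subseteq> cell M H0 x"
        unfolding cell_def using pos_mono_int[OF assms(2)] assms(2) by auto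
    qed
  next
    fix R assume R: "R \<in> regions H0 \<and> cell M Hs x \<subseteq> R"
    then obtain z where z: "z \<notin> \<Union>H0" "R = cell M H0 z" using regions_cell[OF v0] by auto
    have "x \<in> cell M Hs x" using assms(3) by (rule self_in_cell)
    then have "x \<in> cell M H0 z" using R z by auto
    then have "pos M H0 x = pos M H0 z" unfolding cell_def by auto
    then show "R = cell M H0 x" using z x0 cell_eq_iff by metis
  qed
qed


lemma hyperplane_sub_eq:
  fixes a b :: "'a::euclidean_space"
  assumes "a \<noteq> 0" "b \<noteq> 0" "{x. a \<bullet> x = 0} \<subseteq> {x. b \<bullet> x = 0}"
  shows "{x. a \<bullet> x = 0} = {x. b \<bullet> x = 0}"
  by (rule subspace_dim_equal) (use assms dim_hyperplane[OF assms(1)] dim_hyperplane[OF assms(2)] subspace_hyperplane in auto)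

lemma exists_v:
  fixes Hs H0 H1 :: "'a::euclidean_space set set"
  assumes fin: "finite Hs" and val: "validN N Hs" and spl: "Hs = H0 \<union> H1" and dj: "H0 \<inter> H1 = {}"
    and modc: "modular_cond H0 H1" and rk: "arr_rank H0 < arr_rank Hs"
  shows "\<exists>v. (\<forall>K\<in>H0. N K \<bullet> v = 0) \<and> (\<forall>h\<in>H1. N h \<bullet> v \<noteq> 0)"
proof -
  define Nm where "Nm S = {a. a \<noteq> 0 \<and> (\<exists>H\<in>S. H = {x. a \<bullet> x = 0})}" for S :: "'a set set"
  have rkd: "arr_rank S = dim (Nm S)" for S unfolding arr_rank_def Nm_def by simp
  have "\<not> Nm Hs \<subseteq> span (Nm H0)"
  proof
    assume "Nm Hs \<subseteq> span (Nm H0)"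
    then have "dim (Nm Hs) \<le> dim (Nm H0)" using dim_subset dim_span by metis
    then show False using rk rkd by simp
  qed
  then obtain a G where a: "a \<noteq> 0" "G \<in> Hs" "G = {x. a \<bullet> x = 0}" "a \<notin> span (Nm H0)"
    unfolding Nm_def by blast
  obtain y z where yz: "y \<in> span (Nm H0)" "\<And>w. w \<in> span (Nm H0) \<Longrightarrow> orthogonal z w" "a = y + z"
    using orthogonal_subspace_decomp_exists by blast
  have NK: "N K \<in> Nm H0" if "K \<in> H0" for K
    using val that spl unfolding validN_def Nm_def by blast
  have zK: "N K \<bullet> z = 0" if "K \<in> H0" for K
    using yz(2)[of "N K"] NK[OF that] span_base[of "N K" "Nm H0"] unfolding orthogonal_def
    by (simp add: inner_commute)
  have "z \<noteq> 0" using yz a by auto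
  have "a \<bullet> z = z \<bullet> z" using yz(2)[OF yz(1)] yz(3) unfolding orthogonal_def
    by (simp add: inner_add_left inner_add_right inner_commute)
  then have az: "a \<bullet> z \<noteq> 0" using \<open>z \<noteq> 0\<close> by simp
  have GH1: "G \<in> H1"
  proof (rule ccontr)
    assume "G \<notin> H1"
    then have "G \<in> H0" using a spl by auto
    then have "a \<in> Nm H0" using a unfolding Nm_def by blast
    then show False using a span_base by blast
  qed
  have NGz: "N G \<bullet> z \<noteq> 0"
  proof
    assume "N G \<bullet> z = 0"
    then have "z \<in> G" using val a(2) unfolding validN_def by blast
    then show False using a az by blast
  qed
  define X where "X = {w. \<forall>K\<in>H0. N K \<bullet> w = 0}"
  have zX: "z \<in> X" using zK unfolding X_def by blast
  have each: "\<exists>w\<in>X. N h \<bullet> w \<noteq> 0" if h: "h \<in> H1" for h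
  proof (cases "h = G")
    case True then show ?thesis using zX NGz by blast
  next
    case False
    show ?thesis
    proof (rule ccontr)
      assume "\<not> ?thesis"
      then have hz: "N h \<bullet> z = 0" using zX by blast
      obtain K where K: "K \<in> H0" "h \<inter> G \<subseteq> K"
        using modc h GH1 False unfolding modular_cond_def by blast
      have hv: "N h \<noteq> 0" "h = {x. N h \<bullet> x = 0}" using val h spl unfolding validN_def by auto
      have Gv: "G = {x. N G \<bullet> x = 0}" using val a(2) unfolding validN_def by auto
      have Kv: "N K \<noteq> 0" "K = {x. N K \<bullet> x = 0}" using val K spl unfolding validN_def by auto
      have "h \<subseteq> K"
      proof
        fix x assume x: "x \<in> h"
        define t where "t = (N G \<bullet> x) / (N G \<bullet> z)"
        define x' where "x' = x - t *\<^sub>R z"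
        have "N G \<bullet> x' = 0" unfolding x'_def t_def using NGz by (simp add: inner_diff_right)
        moreover have "N h \<bullet> x = 0" using x hv(2) by blast
        then have "N h \<bullet> x' = 0" unfolding x'_def using hz by (simp add: inner_diff_right)
        ultimately have "x' \<in> K" using K hv Gv by blast
        then have "N K \<bullet> x' = 0" using Kv by blast
        then have "N K \<bullet> x = 0" unfolding x'_def using zK[OF K(1)] by (simp add: inner_diff_right)
        then show "x \<in> K" using Kv by blast
      qed
      then have "h = K" using hyperplane_sub_eq[OF hv(1) Kv(1)] hv(2) Kv(2) by metis
      then show False using K h dj by blast
    qed
  qed
  have "finite H1" using fin spl by simp
  have "\<forall>S. S \<subseteq> H1 \<longrightarrow> (\<exists>v\<in>X. \<forall>h\<in>S. N h \<bullet> v \<noteq> 0)"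
  proof (intro allI impI)
    fix S assume "S \<subseteq> H1"
    then have "finite S" using \<open>finite H1\<close> finite_subset by blast
    then show "\<exists>v\<in>X. \<forall>h\<in>S. N h \<bullet> v \<noteq> 0" using \<open>S \<subseteq> H1\<close>
    proof (induction S rule: finite_induct)
      case empty
      then show ?case using zX by blast
    next
      case (insert h S)
      then obtain v where v: "v \<in> X" "\<forall>g\<in>S. N g \<bullet> v \<noteq> 0" by auto
      obtain w where w: "w \<in> X" "N h \<bullet> w \<noteq> 0" using each insert by blast
      define B where "B = (\<lambda>g. - (N g \<bullet> v) / (N g \<bullet> w)) ` insert h S"
      have "finite B" unfolding B_def using insert by simp
      then obtain t where t: "t \<notin> B" using ex_new_if_finite[OF infinite_UNIV_char_0] by blast
      define u where "u = v + t *\<^sub>R w"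
      have "u \<in> X" using v w unfolding X_def u_def by (simp add: inner_add_right)
      moreover have "N g \<bullet> u \<noteq> 0" if g: "g \<in> insert h S" for g
      proof
        assume 0: "N g \<bullet> u = 0"
        then have e: "N g \<bullet> v + t * (N g \<bullet> w) = 0" unfolding u_def by (simp add: inner_add_right)
        show False
        proof (cases "N g \<bullet> w = 0")
          case True
          then have "N g \<bullet> v = 0" using e by simp
          then show False using g v w True by auto
        next
          case False
          then have "t = - (N g \<bullet> v) / (N g \<bullet> w)" using e by (simp add: field_simps)
          then show False using t g unfolding B_def by blast
        qed
      qed
      ultimately show ?case by blast
    qed
  qed
  then show ?thesis unfolding X_def by blast
qed


locale fib_ctx =
  fixes Hs H0 H1 :: "'a::euclidean_space set set" and M :: "'a set \<Rightarrow> 'a" and v :: 'a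
  assumes fin: "finite Hs" and spl: "Hs = H0 \<union> H1" and dj: "H0 \<inter> H1 = {}"
    and val: "validN M Hs" and vK: "\<forall>K\<in>H0. M K \<bullet> v = 0" and vh: "\<forall>h\<in>H1. M h \<bullet> v > 0"
    and modc: "modular_cond H0 H1"
begin

lemma val0: "validN M H0" using val spl validN_mono by blast
lemma fin1: "finite H1" using fin spl by simp
lemma fin0: "finite H0" using fin spl by simp

lemma meet_empty:
  assumes "h \<in> H1" "h' \<in> H1" "h \<noteq> h'" "w \<notin> \<Union>H0" "M h \<bullet> w = 0" "M h' \<bullet> w = 0"
  shows False
proof -
  obtain K where K: "K \<in> H0" "h \<inter> h' \<subseteq> K" using modc assms unfolding modular_cond_def by blast
  have "w \<in> h" "w \<in> h'" using val assms spl unfolding validN_def by blast+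
  then show False using K assms(4) by blast
qed

lemma shiftK: "K \<in> H0 \<Longrightarrow> M K \<bullet> (z + t *\<^sub>R v) = M K \<bullet> z"
  using vK by (simp add: inner_add_right)

lemma notin_shift: "z \<notin> \<Union>H0 \<Longrightarrow> z + t *\<^sub>R v \<notin> \<Union>H0"
  using validN_notin[OF val0] shiftK by metis

lemma pos_shift: "pos M H0 (z + t *\<^sub>R v) = pos M H0 z"
  unfolding pos_def using shiftK by auto

lemma chain:
  assumes x: "x \<notin> \<Union>Hs" and y: "y \<notin> \<Union>Hs" and pe: "pos M H0 x = pos M H0 y"
  shows "pos M H1 x \<subseteq> pos M H1 y \<or> pos M H1 y \<subseteq> pos M H1 x"
proof (rule ccontr)
  assume "\<not> ?thesis"
  then obtain h h' where h: "h \<in> pos M H1 x" "h \<notin> pos M H1 y" and h': "h' \<in> pos M H1 y" "h' \<notin> pos M H1 x"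
    by blast
  have hH: "h \<in> H1" "h' \<in> H1" using h h' unfolding pos_def by auto
  have nz: "M g \<bullet> x \<noteq> 0" "M g \<bullet> y \<noteq> 0" if "g \<in> H1" for g
    using validN_notin[OF val] x y that spl by auto
  have v1: "M h \<bullet> x > 0" "M h \<bullet> y < 0" using h hH nz[of h] unfolding pos_def by auto
  have v2: "M h' \<bullet> y > 0" "M h' \<bullet> x < 0" using h' hH nz[of h'] unfolding pos_def by auto
  have hne: "h \<noteq> h'" using h h' by auto
  define c where "c = M h \<bullet> v"
  define c' where "c' = M h' \<bullet> v"
  have cp: "c > 0" "c' > 0" using vh hH unfolding c_def c'_def by auto
  define phi where "phi = (1/c) *\<^sub>R M h - (1/c') *\<^sub>R M h'"
  have phiz: "phi \<bullet> z = M h \<bullet> z / c - M h' \<bullet> z / c'" for z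
    unfolding phi_def by (simp add: inner_diff_left)
  have "M h \<bullet> y / c < 0" "M h' \<bullet> y / c' > 0" using v1 v2 cp by (auto simp: divide_neg_pos)
  then have py: "phi \<bullet> y \<le> 0" using phiz by simp
  have "M h \<bullet> x / c > 0" "M h' \<bullet> x / c' < 0" using v1 v2 cp by (auto simp: divide_neg_pos)
  then have px: "0 \<le> phi \<bullet> x" using phiz by simp
  obtain z where zs: "z \<in> closed_segment x y" and pz: "phi \<bullet> z = 0"
    using connected_ivt_hyperplane[of "closed_segment x y" y x phi 0] py px by (auto simp: connected_segment)
  have x0: "x \<notin> \<Union>H0" "y \<notin> \<Union>H0" using x y spl by auto
  have "x \<in> cell M H0 x" using x0(1) by (rule self_in_cell)
  moreover have "y \<in> cell M H0 x" using x0 pe unfolding cell_def by auto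
  ultimately have "closed_segment x y \<subseteq> cell M H0 x"
    using convex_cell[OF val0 x0(1)] closed_segment_subset by blast
  then have "z \<in> cell M H0 x" using zs by blast
  then have z0: "z \<notin> \<Union>H0" unfolding cell_def by auto
  define w where "w = z + (- (M h \<bullet> z / c)) *\<^sub>R v"
  have w0: "w \<notin> \<Union>H0" unfolding w_def by (rule notin_shift[OF z0])
  have e: "M h \<bullet> z / c = M h' \<bullet> z / c'" using pz phiz by simp
  have "M h \<bullet> w = M h \<bullet> z - (M h \<bullet> z / c) * c" unfolding w_def by (simp add: inner_add_right inner_diff_right c_def)
  then have "M h \<bullet> w = 0" using cp by simp
  moreover have "M h' \<bullet> w = M h' \<bullet> z - (M h' \<bullet> z / c') * c'" unfolding w_def using e
    by (simp add: inner_add_right inner_diff_right c'_def)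
  then have "M h' \<bullet> w = 0" using cp by simp
  ultimately show False using meet_empty[OF hH hne w0] by blast
qed

lemma surj:
  assumes p: "p \<notin> \<Union>H0" and m: "m \<le> card H1"
  shows "\<exists>y. y \<notin> \<Union>Hs \<and> pos M H0 y = pos M H0 p \<and> card (pos M H1 y) = m"
proof -
  define tau where "tau h = - (M h \<bullet> p) / (M h \<bullet> v)" for h
  have cp: "M h \<bullet> v > 0" if "h \<in> H1" for h using vh that by auto
  have lin: "M h \<bullet> (p + t *\<^sub>R v) = (M h \<bullet> v) * (t - tau h)" if "h \<in> H1" for h t
    unfolding tau_def using cp[OF that] by (simp add: inner_add_right field_simps)
  have inj: "inj_on tau H1"
  proof (rule inj_onI)
    fix h h' assume hh: "h \<in> H1" "h' \<in> H1" "tau h = tau h'"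
    show "h = h'"
    proof (rule ccontr)
      assume ne: "h \<noteq> h'"
      let ?w = "p + tau h *\<^sub>R v"
      have "M h \<bullet> ?w = 0" "M h' \<bullet> ?w = 0" using lin[OF hh(1)] lin[OF hh(2)] hh(3) by auto
      then show False using meet_empty[OF hh(1,2) ne notin_shift[OF p]] by blast
    qed
  qed
  have cT: "card (tau ` H1) = card H1" using card_image[OF inj] .
  obtain t where t: "t \<notin> tau ` H1" "card {u\<in>tau ` H1. u < t} = m"
    using real_gap[of "tau ` H1" m] fin1 m cT by auto
  define y where "y = p + t *\<^sub>R v"
  have P: "pos M H1 y = {h\<in>H1. tau h < t}"
    unfolding pos_def y_def using lin cp by (force simp: zero_less_mult_iff)
  have "tau ` {h\<in>H1. tau h < t} = {u\<in>tau ` H1. u < t}" by auto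
  moreover have "card (tau ` {h\<in>H1. tau h < t}) = card {h\<in>H1. tau h < t}"
    by (rule card_image) (use inj in \<open>auto intro: inj_on_subset\<close>)
  ultimately have c: "card (pos M H1 y) = m" using P t by simp
  have y1: "M h \<bullet> y \<noteq> 0" if "h \<in> H1" for h
    using lin[OF that, of t] t(1) cp[OF that] that unfolding y_def by auto
  have y0: "y \<notin> \<Union>H0" unfolding y_def by (rule notin_shift[OF p])
  have "\<forall>H\<in>Hs. M H \<bullet> y \<noteq> 0"
    using y0 y1 validN_notin[OF val0] spl by auto
  then have "y \<notin> \<Union>Hs" using validN_notin[OF val] by blast
  moreover have "pos M H0 y = pos M H0 p" unfolding y_def by (rule pos_shift)
  ultimately show ?thesis using c by blast
qed


definition yy where
  "yy p m = (SOME y. y \<notin> \<Union>Hs \<and> pos M H0 y = pos M H0 p \<and> card (pos M H1 y) = m)"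

lemma yy:
  assumes "p \<notin> \<Union>H0" "m \<le> card H1"
  shows "yy p m \<notin> \<Union>Hs \<and> pos M H0 (yy p m) = pos M H0 p \<and> card (pos M H1 (yy p m)) = m"
  unfolding yy_def using someI_ex[OF surj[OF assms]] .

lemma pos_split: "pos M Hs y = pos M H0 y \<union> pos M H1 y"
  unfolding pos_def spl by auto

lemma card_sd_split:
  "card (sd (pos M Hs x) (pos M Hs y)) = card (sd (pos M H0 x) (pos M H0 y)) + card (sd (pos M H1 x) (pos M H1 y))"
proof -
  have e: "sd (pos M Hs x) (pos M Hs y) = sd (pos M H0 x) (pos M H0 y) \<union> sd (pos M H1 x) (pos M H1 y)"
    unfolding sd_def pos_def spl using dj by auto
  have f0: "finite (sd (pos M H0 x) (pos M H0 y))"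
    using fin0 pos_subset[of M H0] unfolding sd_def by (meson finite_Diff finite_UnI finite_subset)
  have f1: "finite (sd (pos M H1 x) (pos M H1 y))"
    using fin1 pos_subset[of M H1] unfolding sd_def by (meson finite_Diff finite_UnI finite_subset)
  have d: "sd (pos M H0 x) (pos M H0 y) \<inter> sd (pos M H1 x) (pos M H1 y) = {}"
    unfolding sd_def pos_def using dj by auto
  show ?thesis unfolding e using card_Un_disjoint[OF f0 f1 d] .
qed

lemma adj_iff:
  assumes "x \<notin> \<Union>Hs" "y \<notin> \<Union>Hs"
  shows "region_adj Hs (cell M Hs x) (cell M Hs y) \<longleftrightarrow>
    card (sd (pos M H0 x) (pos M H0 y)) + card (sd (pos M H1 x) (pos M H1 y)) = 1"
  using region_adj_cell[OF val assms] card_sd_split unfolding sd_def by simp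

lemma fiber:
  assumes p: "p \<notin> \<Union>H0"
  shows "{X\<in>regions Hs. rho H0 X = cell M H0 p} = cell M Hs ` {y. y \<notin> \<Union>Hs \<and> pos M H0 y = pos M H0 p}"
proof -
  have "rho H0 (cell M Hs y) = cell M H0 p \<longleftrightarrow> pos M H0 y = pos M H0 p" if "y \<notin> \<Union>Hs" for y
  proof -
    have "rho H0 (cell M Hs y) = cell M H0 y" using rho_cell[OF val _ that] spl by blast
    moreover have "y \<notin> \<Union>H0" using that spl by auto
    ultimately show ?thesis using cell_eq_iff[OF _ p] by metis
  qed
  then show ?thesis unfolding regions_cell[OF val] by auto
qed

lemma pos1_fin: "finite (pos M H1 y)" using fin1 pos_subset finite_subset by metis

lemma pos1_card: "card (pos M H1 y) \<le> card H1" using fin1 pos_subset card_mono by metis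

lemma partI:
  assumes p: "p \<notin> \<Union>H0"
  shows "path_enum (region_adj Hs) {X\<in>regions Hs. rho H0 X = cell M H0 p} (card H1) (\<lambda>m. cell M Hs (yy p m))"
proof -
  let ?A = "\<lambda>m. cell M Hs (yy p m)"
  have adj: "region_adj Hs (?A i) (?A j) \<longleftrightarrow> (i = Suc j \<or> j = Suc i)"
    if ij: "i \<le> card H1" "j \<le> card H1" for i j
  proof -
    note a = yy[OF p ij(1)] and b = yy[OF p ij(2)]
    have "sd (pos M H0 (yy p i)) (pos M H0 (yy p j)) = {}" using a b unfolding sd_def by auto
    moreover have "pos M H1 (yy p i) \<subseteq> pos M H1 (yy p j) \<or> pos M H1 (yy p j) \<subseteq> pos M H1 (yy p i)"
      by (rule chain) (use a b in auto)
    then have "card (sd (pos M H1 (yy p i)) (pos M H1 (yy p j))) = (if i \<le> j then j - i else i - j)"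
      using nested_card[OF pos1_fin pos1_fin] a b by presburger
    moreover have x1: "yy p i \<notin> \<Union>Hs" "yy p j \<notin> \<Union>Hs" using a b by blast+
    ultimately show ?thesis using adj_iff[OF x1] by auto
  qed
  have inj: "inj_on ?A {0..card H1}"
  proof (rule inj_onI)
    fix i j assume ij: "i \<in> {0..card H1}" "j \<in> {0..card H1}" "?A i = ?A j"
    have ij': "i \<le> card H1" "j \<le> card H1" using ij(1,2) by auto
    note a = yy[OF p ij'(1)] and b = yy[OF p ij'(2)]
    have i1: "yy p i \<notin> \<Union>Hs" and j1: "yy p j \<notin> \<Union>Hs" using a b by blast+
    have "pos M Hs (yy p i) = pos M Hs (yy p j)" using cell_eq_iff[OF i1 j1] ij(3) by blast
    then have "pos M H1 (yy p i) = pos M H1 (yy p j)" using pos_mono_int[of H1 Hs] spl by auto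
    then show "i = j" using a b by metis
  qed
  have img: "?A ` {0..card H1} = {X\<in>regions Hs. rho H0 X = cell M H0 p}"
    unfolding fiber[OF p]
  proof
    show "?A ` {0..card H1} \<subseteq> cell M Hs ` {y. y \<notin> \<Union>Hs \<and> pos M H0 y = pos M H0 p}"
      using yy[OF p] by auto
    show "cell M Hs ` {y. y \<notin> \<Union>Hs \<and> pos M H0 y = pos M H0 p} \<subseteq> ?A ` {0..card H1}"
    proof
      fix X assume "X \<in> cell M Hs ` {y. y \<notin> \<Union>Hs \<and> pos M H0 y = pos M H0 p}"
      then obtain y where y: "y \<notin> \<Union>Hs" "pos M H0 y = pos M H0 p" "X = cell M Hs y" by auto
      define m where "m = card (pos M H1 y)"
      have m: "m \<le> card H1" unfolding m_def by (rule pos1_card)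
      note a = yy[OF p m]
      have "pos M H1 y \<subseteq> pos M H1 (yy p m) \<or> pos M H1 (yy p m) \<subseteq> pos M H1 y"
        by (rule chain) (use a y in auto)
      then have "pos M H1 y = pos M H1 (yy p m)"
        using nested_eq[OF pos1_fin pos1_fin] a m_def by metis
      then have "pos M Hs y = pos M Hs (yy p m)" using pos_split a y by auto
      then have "X = ?A m" using y a cell_eq_iff by metis
      then show "X \<in> ?A ` {0..card H1}" using m by auto
    qed
  qed
  show ?thesis unfolding path_enum_def bij_betw_def using inj img adj by auto
qed

lemma partII:
  assumes p: "p \<notin> \<Union>H0" and q: "q \<notin> \<Union>H0" and c1: "card (sd (pos M H0 p) (pos M H0 q)) = 1"
  shows "region_adj Hs (cell M Hs (yy p 0)) (cell M Hs (yy q 0))"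
    and "region_adj Hs (cell M Hs (yy p (card H1))) (cell M Hs (yy q (card H1)))"
    and "\<And>i j. i \<le> card H1 \<Longrightarrow> j \<le> card H1 \<Longrightarrow>
          region_adj Hs (cell M Hs (yy p i)) (cell M Hs (yy q j)) \<Longrightarrow> i = j"
proof -
  have z: "0 \<le> card H1" by simp
  note a = yy[OF p z] and b = yy[OF q z]
  have "pos M H1 (yy p 0) = {}" "pos M H1 (yy q 0) = {}" using a b pos1_fin by auto
  then have e1: "sd (pos M H1 (yy p 0)) (pos M H1 (yy q 0)) = {}" unfolding sd_def by simp
  have e0: "sd (pos M H0 (yy p 0)) (pos M H0 (yy q 0)) = sd (pos M H0 p) (pos M H0 q)" using a b by simp
  have x1: "yy p 0 \<notin> \<Union>Hs" "yy q 0 \<notin> \<Union>Hs" using a b by blast+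
  show "region_adj Hs (cell M Hs (yy p 0)) (cell M Hs (yy q 0))"
    using adj_iff[OF x1] e0 e1 c1 by simp
next
  have z: "card H1 \<le> card H1" by simp
  note a = yy[OF p z] and b = yy[OF q z]
  have "pos M H1 (yy p (card H1)) = H1" 
    using a fin1 pos_subset[of M H1] card_subset_eq[of H1 "pos M H1 (yy p (card H1))"] by blast
  moreover have "pos M H1 (yy q (card H1)) = H1"
    using b fin1 pos_subset[of M H1] card_subset_eq[of H1 "pos M H1 (yy q (card H1))"] by blast
  ultimately have e1: "sd (pos M H1 (yy p (card H1))) (pos M H1 (yy q (card H1))) = {}" unfolding sd_def by simp
  have e0: "sd (pos M H0 (yy p (card H1))) (pos M H0 (yy q (card H1))) = sd (pos M H0 p) (pos M H0 q)"
    using a b by simp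
  have x1: "yy p (card H1) \<notin> \<Union>Hs" "yy q (card H1) \<notin> \<Union>Hs" using a b by blast+
  show "region_adj Hs (cell M Hs (yy p (card H1))) (cell M Hs (yy q (card H1)))"
    using adj_iff[OF x1] e0 e1 c1 by simp
next
  fix i j assume ij: "i \<le> card H1" "j \<le> card H1" and ad: "region_adj Hs (cell M Hs (yy p i)) (cell M Hs (yy q j))"
  note a = yy[OF p ij(1)] and b = yy[OF q ij(2)]
  have e0: "sd (pos M H0 (yy p i)) (pos M H0 (yy q j)) = sd (pos M H0 p) (pos M H0 q)"
    using a b by simp
  have x1: "yy p i \<notin> \<Union>Hs" "yy q j \<notin> \<Union>Hs" using a b by blast+
  have "card (sd (pos M H1 (yy p i)) (pos M H1 (yy q j))) = 0" using adj_iff[OF x1] e0 c1 ad by simp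
  moreover have "finite (sd (pos M H1 (yy p i)) (pos M H1 (yy q j)))"
    unfolding sd_def using pos1_fin by auto
  ultimately have "sd (pos M H1 (yy p i)) (pos M H1 (yy q j)) = {}" by simp
  then have "pos M H1 (yy p i) = pos M H1 (yy q j)" unfolding sd_def by auto
  then show "i = j" using a b by metis
qed

lemma partIII:
  assumes p: "p \<notin> \<Union>H0" and q: "q \<notin> \<Union>H0" and ne: "pos M H0 p \<noteq> pos M H0 q"
    and c1: "card (sd (pos M H0 p) (pos M H0 q)) \<noteq> 1"
    and A: "A \<in> regions Hs" and B: "B \<in> regions Hs"
    and rA: "rho H0 A = cell M H0 p" and rB: "rho H0 B = cell M H0 q"
  shows "\<not> region_adj Hs A B"
proof
  assume ad: "region_adj Hs A B"
  obtain x where x: "x \<notin> \<Union>Hs" "pos M H0 x = pos M H0 p" "A = cell M Hs x"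
    using A rA fiber[OF p] by blast
  obtain y where y: "y \<notin> \<Union>Hs" "pos M H0 y = pos M H0 q" "B = cell M Hs y"
    using B rB fiber[OF q] by blast
  have f: "finite (sd (pos M H0 p) (pos M H0 q))" unfolding sd_def using fin0 pos_subset finite_subset
    by (metis finite_Diff finite_UnI)
  have "sd (pos M H0 p) (pos M H0 q) \<noteq> {}" using ne unfolding sd_def by auto
  then have "card (sd (pos M H0 p) (pos M H0 q)) \<noteq> 0" using f by simp
  moreover have "card (sd (pos M H0 p) (pos M H0 q)) + card (sd (pos M H1 x) (pos M H1 y)) = 1"
    using adj_iff[OF x(1) y(1)] ad x y by simp
  ultimately show False using c1 by linarith
qed

end

theorem lemma2p6:
  fixes \<H> \<H>0 \<H>1 :: "'a::euclidean_space set set" and n :: nat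
  assumes "arrangement \<H>" and "supersolvable \<H>" and "arr_rank \<H> = n" and "n \<ge> 3"
    and "\<H> = \<H>0 \<union> \<H>1" and "\<H>0 \<inter> \<H>1 = {}" and "\<H>0 \<noteq> {}" and "\<H>1 \<noteq> {}"
    and "supersolvable \<H>0" and "arr_rank \<H>0 = n - 1" and "modular_cond \<H>0 \<H>1"
  shows
    "(\<forall>R\<in>regions \<H>0. \<exists>A. path_enum (region_adj \<H>) {A\<in>regions \<H>. rho \<H>0 A = R} (card \<H>1) A)
     \<and> (\<forall>R\<in>regions \<H>0. \<forall>R'\<in>regions \<H>0. region_adj \<H>0 R R' \<longrightarrow>
          (\<exists>A B. path_enum (region_adj \<H>) {X\<in>regions \<H>. rho \<H>0 X = R} (card \<H>1) A
               \<and> path_enum (region_adj \<H>) {X\<in>regions \<H>. rho \<H>0 X = R'} (card \<H>1) B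
               \<and> region_adj \<H> (A 0) (B 0)
               \<and> region_adj \<H> (A (card \<H>1)) (B (card \<H>1))
               \<and> (\<forall>i\<le>card \<H>1. \<forall>j\<le>card \<H>1. region_adj \<H> (A i) (B j) \<longrightarrow> i = j)))
     \<and> (\<forall>R\<in>regions \<H>0. \<forall>R'\<in>regions \<H>0. R \<noteq> R' \<longrightarrow> \<not> region_adj \<H>0 R R' \<longrightarrow>
          (\<forall>A\<in>regions \<H>. \<forall>B\<in>regions \<H>. rho \<H>0 A = R \<longrightarrow> rho \<H>0 B = R' \<longrightarrow>
             \<not> region_adj \<H> A B))"
proof -
  define N0 where "N0 H = (SOME a. a \<noteq> 0 \<and> H = {x. a \<bullet> x = 0})" for H :: "'a set"
  have fin: "finite \<H>" using assms(1) unfolding arrangement_def by blast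
  have vN0: "validN N0 \<H>" unfolding validN_def
  proof
    fix H assume "H \<in> \<H>"
    then have "\<exists>a. a \<noteq> 0 \<and> H = {x. a \<bullet> x = 0}"
      using assms(1) unfolding arrangement_def lin_hyperplane_def by blast
    then show "N0 H \<noteq> 0 \<and> H = {x. N0 H \<bullet> x = 0}" unfolding N0_def by (rule someI_ex)
  qed
  have rk: "arr_rank \<H>0 < arr_rank \<H>" using assms(3,4,10) by simp
  obtain v where v0: "\<forall>K\<in>\<H>0. N0 K \<bullet> v = 0" and v1: "\<forall>h\<in>\<H>1. N0 h \<bullet> v \<noteq> 0"
    using exists_v[OF fin vN0 assms(5,6,11) rk] by blast
  define M where "M H = (if H \<in> \<H>1 \<and> N0 H \<bullet> v < 0 then - N0 H else N0 H)" for H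
  have vM: "validN M \<H>" using vN0 unfolding validN_def M_def by auto
  have MK: "\<forall>K\<in>\<H>0. M K \<bullet> v = 0" using v0 unfolding M_def by auto
  have Mh: "\<forall>h\<in>\<H>1. M h \<bullet> v > 0"
  proof
    fix h assume h: "h \<in> \<H>1"
    then have "N0 h \<bullet> v \<noteq> 0" using v1 by blast
    then show "M h \<bullet> v > 0" unfolding M_def using h by auto
  qed
  interpret F: fib_ctx \<H> \<H>0 \<H>1 M v
    by unfold_locales (use fin assms(5,6,11) vM MK Mh in auto)
  have val0: "validN M \<H>0" by (rule F.val0)
  have reg0: "regions \<H>0 = cell M \<H>0 ` (UNIV - \<Union>\<H>0)" by (rule regions_cell[OF val0])
  have P1: "\<forall>R\<in>regions \<H>0. \<exists>A. path_enum (region_adj \<H>) {A\<in>regions \<H>. rho \<H>0 A = R} (card \<H>1) A"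
  proof
    fix R assume "R \<in> regions \<H>0"
    then obtain p where p: "p \<notin> \<Union>\<H>0" "R = cell M \<H>0 p" using reg0 by auto
    show "\<exists>A. path_enum (region_adj \<H>) {A\<in>regions \<H>. rho \<H>0 A = R} (card \<H>1) A"
      using F.partI[OF p(1)] p(2) by blast
  qed
  have P2: "\<forall>R\<in>regions \<H>0. \<forall>R'\<in>regions \<H>0. region_adj \<H>0 R R' \<longrightarrow>
          (\<exists>A B. path_enum (region_adj \<H>) {X\<in>regions \<H>. rho \<H>0 X = R} (card \<H>1) A
               \<and> path_enum (region_adj \<H>) {X\<in>regions \<H>. rho \<H>0 X = R'} (card \<H>1) B
               \<and> region_adj \<H> (A 0) (B 0)
               \<and> region_adj \<H> (A (card \<H>1)) (B (card \<H>1))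
               \<and> (\<forall>i\<le>card \<H>1. \<forall>j\<le>card \<H>1. region_adj \<H> (A i) (B j) \<longrightarrow> i = j))"
  proof (intro ballI impI)
    fix R R' assume R: "R \<in> regions \<H>0" and R': "R' \<in> regions \<H>0" and ad: "region_adj \<H>0 R R'"
    obtain p where p: "p \<notin> \<Union>\<H>0" "R = cell M \<H>0 p" using R reg0 by auto
    obtain q where q: "q \<notin> \<Union>\<H>0" "R' = cell M \<H>0 q" using R' reg0 by auto
    have c1: "card (sd (pos M \<H>0 p) (pos M \<H>0 q)) = 1"
      using region_adj_cell[OF val0 p(1) q(1)] ad p(2) q(2) unfolding sd_def by simp
    show "\<exists>A B. path_enum (region_adj \<H>) {X\<in>regions \<H>. rho \<H>0 X = R} (card \<H>1) A
               \<and> path_enum (region_adj \<H>) {X\<in>regions \<H>. rho \<H>0 X = R'} (card \<H>1) B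
               \<and> region_adj \<H> (A 0) (B 0)
               \<and> region_adj \<H> (A (card \<H>1)) (B (card \<H>1))
               \<and> (\<forall>i\<le>card \<H>1. \<forall>j\<le>card \<H>1. region_adj \<H> (A i) (B j) \<longrightarrow> i = j)"
      apply (rule exI[of _ "\<lambda>m. cell M \<H> (F.yy p m)"])
      apply (rule exI[of _ "\<lambda>m. cell M \<H> (F.yy q m)"])
      using F.partI[OF p(1)] F.partI[OF q(1)] F.partII[OF p(1) q(1) c1] p(2) q(2) by blast
  qed
  have P3: "\<forall>R\<in>regions \<H>0. \<forall>R'\<in>regions \<H>0. R \<noteq> R' \<longrightarrow> \<not> region_adj \<H>0 R R' \<longrightarrow>
          (\<forall>A\<in>regions \<H>. \<forall>B\<in>regions \<H>. rho \<H>0 A = R \<longrightarrow> rho \<H>0 B = R' \<longrightarrow>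
             \<not> region_adj \<H> A B)"
  proof (intro ballI impI)
    fix R R' A B assume R: "R \<in> regions \<H>0" and R': "R' \<in> regions \<H>0" and ne: "R \<noteq> R'"
      and nad: "\<not> region_adj \<H>0 R R'" and A: "A \<in> regions \<H>" and B: "B \<in> regions \<H>"
      and rA: "rho \<H>0 A = R" and rB: "rho \<H>0 B = R'"
    obtain p where p: "p \<notin> \<Union>\<H>0" "R = cell M \<H>0 p" using R reg0 by auto
    obtain q where q: "q \<notin> \<Union>\<H>0" "R' = cell M \<H>0 q" using R' reg0 by auto
    have c1: "card (sd (pos M \<H>0 p) (pos M \<H>0 q)) \<noteq> 1"
      using region_adj_cell[OF val0 p(1) q(1)] nad p(2) q(2) unfolding sd_def by simp
    have pne: "pos M \<H>0 p \<noteq> pos M \<H>0 q" using cell_eq_iff[OF p(1) q(1)] ne p(2) q(2) by blast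
    show "\<not> region_adj \<H> A B"
      using F.partIII[OF p(1) q(1) pne c1 A B] rA rB p(2) q(2) by blast
  qed
  show ?thesis using P1 P2 P3 by blast
qed

end
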